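(* Let $H_1,H_2,H_3,H_4$ be the following graphs. $H_1$: vertices $v_1,\dots,v_5$, edges $v_1v_2,v_2v_3,v_3v_4,v_4v_5,v_5v_1,v_2v_4,v_3v_5$. $H_2$: vertices $v_1,\dots,v_6$, edges $v_1v_2,v_2v_3,v_3v_4,v_4v_5,v_5v_6,v_6v_1,v_2v_5,v_3v_6$. $H_3$: vertices $v_1,\dots,v_7$, edges $v_1v_2,\dots,v_6v_7,v_7v_1$ (the $7$-cycle) together with $v_2v_5,v_3v_6,v_4v_7$. $H_4$: vertices $v_1,\dots,v_6$, edges $v_1v_2,v_2v_3,v_3v_4,v_4v_5,v_5v_6,v_6v_1,v_2v_6,v_3v_5$. Let $G$ be a cubic graph containing $H_i$ as an induced subgraph, for some $1\le i\le 4$. Then any minimum $2$-conversion set of $G$ contains exactly $2$ vertices from each copy of $H_i$.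
   Context: For a graph $G=(V,E)$ and a set $S_0\subseteq V$, the irreversible $2$-threshold conversion process is defined by: for $t=1,2,\dots$, $S_t$ is obtained from $S_{t-1}$ by adjoining all vertices having at least $2$ neighbours in $S_{t-1}$. $S_0$ is a $2$-conversion set if $S_t=V$ for some $t\ge 0$; a minimum $2$-conversion set is one of smallest size. *)

theory Defs
  imports Main
begin

definition simple_graph :: "'a set \<Rightarrow> ('a \<Rightarrow> 'a \<Rightarrow> bool) \<Rightarrow> bool" where
  "simple_graph V E \<longleftrightarrow> finite V \<and> (\<forall>u v. E u v \<longrightarrow> u \<in> V \<and> v \<in> V)
     \<and> (\<forall>u v. E u v \<longrightarrow> E v u) \<and> (\<forall>v. \<not> E v v)"

definition cubic_graph :: "'a set \<Rightarrow> ('a \<Rightarrow> 'a \<Rightarrow> bool) \<Rightarrow> bool" where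
  "cubic_graph V E \<longleftrightarrow> simple_graph V E \<and> (\<forall>v\<in>V. card {u. E v u} = 3)"

definition conv_step :: "'a set \<Rightarrow> ('a \<Rightarrow> 'a \<Rightarrow> bool) \<Rightarrow> 'a set \<Rightarrow> 'a set" where
  "conv_step V E S = S \<union> {v \<in> V. card {u \<in> S. E v u} \<ge> 2}"

definition conversion_set :: "'a set \<Rightarrow> ('a \<Rightarrow> 'a \<Rightarrow> bool) \<Rightarrow> 'a set \<Rightarrow> bool" where
  "conversion_set V E S \<longleftrightarrow> S \<subseteq> V \<and> (\<exists>t. (conv_step V E ^^ t) S = V)"

definition min_conversion_set :: "'a set \<Rightarrow> ('a \<Rightarrow> 'a \<Rightarrow> bool) \<Rightarrow> 'a set \<Rightarrow> bool" where
  "min_conversion_set V E S \<longleftrightarrow> conversion_set V E S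
     \<and> (\<forall>T. conversion_set V E T \<longrightarrow> card S \<le> card T)"

text \<open>Small pattern graphs on vertices 1..n given by edge lists.\<close>
definition H_n :: "nat \<Rightarrow> nat" where
  "H_n i = (if i = 1 then 5 else if i = 2 then 6 else if i = 3 then 7 else 6)"

definition H_edges :: "nat \<Rightarrow> (nat \<times> nat) list" where
  "H_edges i =
    (if i = 1 then [(1,2),(2,3),(3,4),(4,5),(5,1),(2,4),(3,5)]
     else if i = 2 then [(1,2),(2,3),(3,4),(4,5),(5,6),(6,1),(2,5),(3,6)]
     else if i = 3 then [(1,2),(2,3),(3,4),(4,5),(5,6),(6,7),(7,1),(2,5),(3,6),(4,7)]
     else [(1,2),(2,3),(3,4),(4,5),(5,6),(6,1),(2,6),(3,5)])"

definition H_adj :: "nat \<Rightarrow> nat \<Rightarrow> nat \<Rightarrow> bool" where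
  "H_adj i a b \<longleftrightarrow> (a, b) \<in> set (H_edges i) \<or> (b, a) \<in> set (H_edges i)"

definition induced_copy :: "'a set \<Rightarrow> ('a \<Rightarrow> 'a \<Rightarrow> bool) \<Rightarrow> nat \<Rightarrow> (nat \<Rightarrow> 'a) \<Rightarrow> bool" where
  "induced_copy V E i f \<longleftrightarrow> inj_on f {1..H_n i} \<and> f ` {1..H_n i} \<subseteq> V
     \<and> (\<forall>a\<in>{1..H_n i}. \<forall>b\<in>{1..H_n i}. E (f a) (f b) \<longleftrightarrow> H_adj i a b)"

end

theory Submission
  imports Defs
begin

definition core_ok :: "nat \<Rightarrow> nat \<Rightarrow> nat set \<Rightarrow> bool" where
 "core_ok i j D \<longleftrightarrow> D \<subseteq> {1..H_n i} - {j} \<and> D \<noteq> {} \<and>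
   (\<forall>a\<in>D. \<exists>b\<in>D. \<exists>c\<in>D. b \<noteq> c \<and> H_adj i a b \<and> H_adj i a c)"

lemma core_1_1: "core_ok 1 1 {2,3,4,5}"
  unfolding core_ok_def H_adj_def H_edges_def H_n_def by auto

lemma core_1_2: "core_ok 1 2 {3,4,5}"
  unfolding core_ok_def H_adj_def H_edges_def H_n_def by auto

lemma core_1_3: "core_ok 1 3 {1,2,4,5}"
  unfolding core_ok_def H_adj_def H_edges_def H_n_def by auto

lemma core_1_4: "core_ok 1 4 {1,2,3,5}"
  unfolding core_ok_def H_adj_def H_edges_def H_n_def by auto

lemma core_1_5: "core_ok 1 5 {2,3,4}"
  unfolding core_ok_def H_adj_def H_edges_def H_n_def by auto

lemma core_2_1: "core_ok 2 1 {2,3,4,5,6}"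
  unfolding core_ok_def H_adj_def H_edges_def H_n_def by auto

lemma core_2_2: "core_ok 2 2 {3,4,5,6}"
  unfolding core_ok_def H_adj_def H_edges_def H_n_def by auto

lemma core_2_3: "core_ok 2 3 {1,2,5,6}"
  unfolding core_ok_def H_adj_def H_edges_def H_n_def by auto

lemma core_2_4: "core_ok 2 4 {1,2,3,5,6}"
  unfolding core_ok_def H_adj_def H_edges_def H_n_def by auto

lemma core_2_5: "core_ok 2 5 {1,2,3,6}"
  unfolding core_ok_def H_adj_def H_edges_def H_n_def by auto

lemma core_2_6: "core_ok 2 6 {2,3,4,5}"
  unfolding core_ok_def H_adj_def H_edges_def H_n_def by auto

lemma core_3_1: "core_ok 3 1 {2,3,4,5,6,7}"
  unfolding core_ok_def H_adj_def H_edges_def H_n_def by auto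

lemma core_3_2: "core_ok 3 2 {3,4,5,6,7}"
  unfolding core_ok_def H_adj_def H_edges_def H_n_def by auto

lemma core_3_3: "core_ok 3 3 {1,2,4,5,6,7}"
  unfolding core_ok_def H_adj_def H_edges_def H_n_def by auto

lemma core_3_4: "core_ok 3 4 {1,2,3,5,6,7}"
  unfolding core_ok_def H_adj_def H_edges_def H_n_def by auto

lemma core_3_5: "core_ok 3 5 {1,2,3,4,6,7}"
  unfolding core_ok_def H_adj_def H_edges_def H_n_def by auto

lemma core_3_6: "core_ok 3 6 {1,2,3,4,5,7}"
  unfolding core_ok_def H_adj_def H_edges_def H_n_def by auto

lemma core_3_7: "core_ok 3 7 {2,3,4,5,6}"
  unfolding core_ok_def H_adj_def H_edges_def H_n_def by auto

lemma core_4_1: "core_ok 4 1 {2,3,4,5,6}"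
  unfolding core_ok_def H_adj_def H_edges_def H_n_def by auto

lemma core_4_2: "core_ok 4 2 {3,4,5}"
  unfolding core_ok_def H_adj_def H_edges_def H_n_def by auto

lemma core_4_3: "core_ok 4 3 {1,2,6}"
  unfolding core_ok_def H_adj_def H_edges_def H_n_def by auto

lemma core_4_4: "core_ok 4 4 {1,2,3,5,6}"
  unfolding core_ok_def H_adj_def H_edges_def H_n_def by auto

lemma core_4_5: "core_ok 4 5 {1,2,6}"
  unfolding core_ok_def H_adj_def H_edges_def H_n_def by auto

lemma core_4_6: "core_ok 4 6 {3,4,5}"
  unfolding core_ok_def H_adj_def H_edges_def H_n_def by auto

lemma core_exists:
  assumes "i \<in> {1..4}" "j \<in> {1..H_n i}"
  shows "\<exists>D. core_ok i j D"
proof -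
  have "i = 1 \<or> i = 2 \<or> i = 3 \<or> i = 4" using assms(1) by auto
  then show ?thesis
  proof (elim disjE)
    assume [simp]: "i = 1"
    have "j = 1 \<or> j = 2 \<or> j = 3 \<or> j = 4 \<or> j = 5" using assms(2) by (auto simp: H_n_def)
    then show ?thesis using core_1_1 core_1_2 core_1_3 core_1_4 core_1_5 \<open>i = 1\<close> by (elim disjE) blast+
  next
    assume [simp]: "i = 2"
    have "j = 1 \<or> j = 2 \<or> j = 3 \<or> j = 4 \<or> j = 5 \<or> j = 6" using assms(2) by (auto simp: H_n_def)
    then show ?thesis using core_2_1 core_2_2 core_2_3 core_2_4 core_2_5 core_2_6 \<open>i = 2\<close> by (elim disjE) blast+
  next
    assume [simp]: "i = 3"
    have "j = 1 \<or> j = 2 \<or> j = 3 \<or> j = 4 \<or> j = 5 \<or> j = 6 \<or> j = 7" using assms(2) by (auto simp: H_n_def)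
    then show ?thesis using core_3_1 core_3_2 core_3_3 core_3_4 core_3_5 core_3_6 core_3_7 \<open>i = 3\<close> by (elim disjE) blast+
  next
    assume [simp]: "i = 4"
    have "j = 1 \<or> j = 2 \<or> j = 3 \<or> j = 4 \<or> j = 5 \<or> j = 6" using assms(2) by (auto simp: H_n_def)
    then show ?thesis using core_4_1 core_4_2 core_4_3 core_4_4 core_4_5 core_4_6 \<open>i = 4\<close> by (elim disjE) blast+
  qed
qed

fun peel :: "nat \<Rightarrow> nat set \<Rightarrow> nat list \<Rightarrow> bool" where
  "peel i P [] = True"
| "peel i P (a # L) = ((\<exists>b\<in>P. \<exists>c\<in>P. b \<noteq> c \<and> H_adj i a b \<and> H_adj i a c) \<and> peel i (insert a P) L)"

definition peel_ok :: "nat \<Rightarrow> nat set \<Rightarrow> nat list \<Rightarrow> bool" where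
  "peel_ok i P L \<longleftrightarrow> peel i P L \<and> P \<subseteq> {1..H_n i} \<and> card P = 2 \<and> P \<union> set L = {1..H_n i}"

lemma peel_1: "peel_ok 1 {3,4} [2,5,1]"
  by code_simp
lemma peel_2: "peel_ok 2 {1,3} [2,6,5,4]"
  by code_simp
lemma peel_3: "peel_ok 3 {2,6} [3,5,4,7,1]"
  by code_simp
lemma peel_4: "peel_ok 4 {2,5} [6,3,1,4]"
  by code_simp

lemma peel_exists:
  assumes "i \<in> {1..4}"
  shows "\<exists>P L. peel_ok i P L"
proof -
  have "i = 1 \<or> i = 2 \<or> i = 3 \<or> i = 4" using assms(1) by auto
  then show ?thesis using peel_1 peel_2 peel_3 peel_4 by (elim disjE) blast+
qed


lemma cubic_nbrs:
  assumes "cubic_graph V E" "v \<in> V"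
  shows "finite {u. E v u}" "card {u. E v u} = 3"
proof -
  show c3: "card {u. E v u} = 3" using assms by (auto simp: cubic_graph_def)
  show "finite {u. E v u}" by (rule card_ge_0_finite) (simp add: c3)
qed

lemma cubic_edge:
  assumes "cubic_graph V E" "E u v"
  shows "u \<in> V" "v \<in> V"
  using assms by (auto simp: cubic_graph_def simple_graph_def)

lemma cubic_finite:
  assumes "cubic_graph V E" shows "finite V"
  using assms by (auto simp: cubic_graph_def simple_graph_def)

lemma fin_sub: "finite {u. E v u} \<Longrightarrow> finite {u\<in>A. E v u}"
  by (rule finite_subset[of _ "{u. E v u}"]) auto

lemma nbr_le1:
  assumes "finite {u. E v u}" "card {u. E v u} = 3" "x \<noteq> y" "E v x" "E v y" "x \<notin> C" "y \<notin> C"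
  shows "card {u\<in>C. E v u} \<le> 1"
proof -
  have "{u\<in>C. E v u} \<subseteq> {u. E v u} - {x,y}" using assms by auto
  hence "card {u\<in>C. E v u} \<le> card ({u. E v u} - {x,y})"
    by (intro card_mono) (use assms in auto)
  also have "\<dots> = 3 - 2" using assms by (subst card_Diff_subset) auto
  finally show ?thesis by simp
qed

lemma core_blocks:
  assumes cub: "cubic_graph V E" and conv: "conversion_set V E S"
    and C: "C \<subseteq> V" "C \<inter> S = {}" "C \<noteq> {}" "\<forall>v\<in>C. 2 \<le> card {u\<in>C. E v u}"
  shows False
proof -
  have "(conv_step V E ^^ t) S \<inter> C = {}" for t
  proof (induction t)
    case 0 then show ?case using C by auto
  next
    case (Suc t)
    let ?X = "(conv_step V E ^^ t) S"
    { fix v assume v: "v \<in> C" "2 \<le> card {u\<in>?X. E v u}"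
      have vV: "v \<in> V" using v C(1) by auto
      note fin = cubic_nbrs(1)[OF cub vV] and c3 = cubic_nbrs(2)[OF cub vV]
      have "card ({u\<in>?X. E v u} \<union> {u\<in>C. E v u}) = card {u\<in>?X. E v u} + card {u\<in>C. E v u}"
        by (rule card_Un_disjoint) (use fin_sub[where E=E and v=v, OF fin] Suc.IH in auto)
      moreover have "card ({u\<in>?X. E v u} \<union> {u\<in>C. E v u}) \<le> 3"
        using card_mono[OF fin, of "{u\<in>?X. E v u} \<union> {u\<in>C. E v u}"] c3 by auto
      moreover have "2 \<le> card {u\<in>C. E v u}" using C(4) v(1) by blast
      ultimately have False using v(2) by linarith }
    moreover have "(conv_step V E ^^ Suc t) S = ?X \<union> {v\<in>V. 2 \<le> card {u\<in>?X. E v u}}"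
      by (simp add: conv_step_def)
    ultimately show ?case using Suc.IH by blast
  qed
  moreover obtain t where "(conv_step V E ^^ t) S = V" using conv by (auto simp: conversion_set_def)
  ultimately show False using C by auto
qed

lemma coreless_conv:
  assumes cub: "cubic_graph V E" and SV: "S \<subseteq> V"
    and noc: "\<forall>C. C \<subseteq> V \<longrightarrow> C \<inter> S = {} \<longrightarrow> C \<noteq> {} \<longrightarrow> \<not>(\<forall>v\<in>C. 2 \<le> card {u\<in>C. E v u})"
  shows "conversion_set V E S"
proof -
  define F where "F t = (conv_step V E ^^ t) S" for t
  have finV: "finite V" using cubic_finite[OF cub] .
  have FS: "F (Suc t) = conv_step V E (F t)" for t by (simp add: F_def)
  have F0: "F 0 = S" by (simp add: F_def)
  have cs1: "X \<subseteq> conv_step V E X" for X by (simp add: conv_step_def)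
  have cs2: "X \<subseteq> V \<Longrightarrow> conv_step V E X \<subseteq> V" for X unfolding conv_step_def by blast
  have FV: "F t \<subseteq> V" for t
    by (induction t) (simp_all only: F0 FS SV cs2)
  have Fmono: "F t \<subseteq> F (Suc t)" for t unfolding FS by (rule cs1)
  have SF: "S \<subseteq> F t" for t
  proof (induction t)
    case 0 show ?case by (simp only: F0 subset_refl)
  next
    case (Suc t) show ?case using Suc Fmono[of t] by (rule subset_trans)
  qed
  have "\<exists>t. F (Suc t) = F t"
  proof (rule ccontr)
    assume "\<nexists>t. F (Suc t) = F t"
    hence ne: "F (Suc t) \<noteq> F t" for t by auto
    have tle: "t \<le> card (F t)" for t
    proof (induction t)
      case 0 show ?case by simp
    next
      case (Suc t)
      have "F t \<subset> F (Suc t)" using Fmono[of t] ne[of t] by auto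
      hence "card (F t) < card (F (Suc t))"
        by (rule psubset_card_mono[OF finite_subset[OF FV finV]])
      thus ?case using Suc by simp
    qed
    have "card (F (Suc (card V))) \<le> card V" using card_mono[OF finV FV] .
    with tle[of "Suc (card V)"] show False by linarith
  qed
  then obtain t where fx: "F (Suc t) = F t" by auto
  have "F t = V"
  proof (rule ccontr)
    assume nV: "F t \<noteq> V"
    let ?C = "V - F t"
    have "?C \<noteq> {}" using FV nV by auto
    moreover have "?C \<inter> S = {}" using SF by auto
    moreover have "\<forall>v\<in>?C. 2 \<le> card {u\<in>?C. E v u}"
    proof
      fix v assume v: "v \<in> ?C"
      have vV: "v \<in> V" using v by auto
      note fin = cubic_nbrs(1)[OF cub vV] and c3 = cubic_nbrs(2)[OF cub vV]
      have lt: "card {u\<in>F t. E v u} < 2"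
      proof (rule ccontr)
        assume "\<not> card {u\<in>F t. E v u} < 2"
        hence "v \<in> conv_step V E (F t)" using vV by (auto simp: conv_step_def)
        hence "v \<in> F (Suc t)" by (simp only: FS)
        thus False using fx v by auto
      qed
      have eq: "{u. E v u} = {u\<in>F t. E v u} \<union> {u\<in>?C. E v u}" using cubic_edge[OF cub] by auto
      have cu: "card ({u\<in>F t. E v u} \<union> {u\<in>?C. E v u}) = card {u\<in>F t. E v u} + card {u\<in>?C. E v u}"
        by (rule card_Un_disjoint[OF fin_sub[where E=E and v=v, OF fin] fin_sub[where E=E and v=v, OF fin]]) auto
      have "card ({u\<in>F t. E v u} \<union> {u\<in>?C. E v u}) = 3" using c3 unfolding eq .
      then show "2 \<le> card {u\<in>?C. E v u}" using cu lt by linarith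
    qed
    moreover have "?C \<subseteq> V" by auto
    ultimately show False using noc[rule_format, of ?C] by blast
  qed
  thus ?thesis using SV unfolding conversion_set_def F_def by blast
qed

lemma peel_avoid:
  assumes cub: "cubic_graph V E" and ic: "induced_copy V E i f"
    and C: "C \<subseteq> V" "\<forall>v\<in>C. 2 \<le> card {u\<in>C. E v u}"
  shows "peel i P L \<Longrightarrow> P \<subseteq> {1..H_n i} \<Longrightarrow> set L \<subseteq> {1..H_n i} \<Longrightarrow> f ` P \<inter> C = {}
    \<Longrightarrow> f ` set L \<inter> C = {}"
proof (induction L arbitrary: P)
  case Nil then show ?case by simp
next
  case (Cons a L)
  from Cons.prems(1) obtain b c where bc: "b\<in>P" "c\<in>P" "b\<noteq>c" "H_adj i a b" "H_adj i a c"
    and pl: "peel i (insert a P) L" by auto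
  have a: "a \<in> {1..H_n i}" using Cons.prems by auto
  have bn: "b \<in> {1..H_n i}" "c \<in> {1..H_n i}" using bc Cons.prems by auto
  have faV: "f a \<in> V" using ic a by (auto simp: induced_copy_def)
  have "f a \<notin> C"
  proof
    assume fa: "f a \<in> C"
    have e: "E (f a) (f b)" "E (f a) (f c)" using ic a bn bc by (auto simp: induced_copy_def)
    have ne: "f b \<noteq> f c" using ic bn bc(3) unfolding induced_copy_def by (metis inj_on_eq_iff)
    have "f b \<notin> C" "f c \<notin> C" using Cons.prems(4) bc by auto
    then have "card {u\<in>C. E (f a) u} \<le> 1"
      by (rule nbr_le1[where E=E and v="f a", OF cubic_nbrs[OF cub faV] ne e])
    moreover have "2 \<le> card {u\<in>C. E (f a) u}" using C(2) fa by blast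
    ultimately show False by linarith
  qed
  then have "f ` insert a P \<inter> C = {}" using Cons.prems(4) by auto
  with Cons.IH[OF pl] Cons.prems a show ?case by auto
qed

theorem lemma5p5:
  fixes V :: "'a set" and E :: "'a \<Rightarrow> 'a \<Rightarrow> bool" and i :: nat
    and f :: "nat \<Rightarrow> 'a" and S :: "'a set"
  assumes "cubic_graph V E"
    and "i \<in> {1..4}"
    and "induced_copy V E i f"
    and "min_conversion_set V E S"
  shows "card (S \<inter> f ` {1..H_n i}) = 2"
proof -
  note cub = assms(1) and ic = assms(3)
  let ?n = "H_n i"
  let ?H = "f ` {1..?n}"
  have conv: "conversion_set V E S" and mn: "\<And>T. conversion_set V E T \<Longrightarrow> card S \<le> card T"
    using assms(4) by (auto simp: min_conversion_set_def)
  have SV: "S \<subseteq> V" using conv by (simp add: conversion_set_def)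
  have finV: "finite V" using cubic_finite[OF cub] .
  have finS: "finite S" using finite_subset[OF SV finV] .
  have HV: "?H \<subseteq> V" using ic by (simp add: induced_copy_def)
  have ge: "2 \<le> card (S \<inter> ?H)"
  proof (rule ccontr)
    assume "\<not> 2 \<le> card (S \<inter> ?H)"
    hence le1: "card (S \<inter> ?H) \<le> 1" by simp
    obtain j where j: "j \<in> {1..?n}" "S \<inter> ?H \<subseteq> {f j}"
    proof (cases "S \<inter> ?H = {}")
      case True
      have "1 \<in> {1..?n}" by (auto simp: H_n_def)
      with True show ?thesis using that by blast
    next
      case False
      have "card (S \<inter> ?H) \<noteq> 0" using False finS by simp
      hence "card (S \<inter> ?H) = 1" using le1 by linarith
      then obtain x where x: "S \<inter> ?H = {x}" by (rule card_1_singletonE)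
      then have "x \<in> ?H" by auto
      then obtain j where "j \<in> {1..?n}" "x = f j" by blast
      with x show ?thesis using that by blast
    qed
    obtain D where D: "core_ok i j D" using core_exists[OF assms(2) j(1)] by blast
    have Dsub: "D \<subseteq> {1..?n}" "j \<notin> D" "D \<noteq> {}" using D by (auto simp: core_ok_def)
    have "f ` D \<subseteq> V" using Dsub HV by auto
    moreover have "f ` D \<inter> S = {}"
    proof (rule ccontr)
      assume "f ` D \<inter> S \<noteq> {}"
      then obtain a where a: "a \<in> D" "f a \<in> S" by auto
      then have "f a = f j" using j Dsub by auto
      then have "a = j" using ic a(1) Dsub j(1) unfolding induced_copy_def by (metis inj_on_eq_iff subsetD)
      then show False using a Dsub by auto
    qed
    moreover have "f ` D \<noteq> {}" using Dsub by auto
    moreover have "\<forall>v\<in>f ` D. 2 \<le> card {u\<in>f ` D. E v u}"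
    proof
      fix v assume "v \<in> f ` D"
      then obtain a where a: "a \<in> D" "v = f a" by auto
      then obtain b c where bc: "b \<in> D" "c \<in> D" "b \<noteq> c" "H_adj i a b" "H_adj i a c"
        using D a(1) unfolding core_ok_def by blast
      have an: "a \<in> {1..?n}" "b \<in> {1..?n}" "c \<in> {1..?n}" using a bc Dsub by auto
      have e: "E (f a) (f b)" "E (f a) (f c)" using ic an bc by (auto simp: induced_copy_def)
      have ne: "f b \<noteq> f c" using ic an bc(3) unfolding induced_copy_def by (metis inj_on_eq_iff)
      have "{f b, f c} \<subseteq> {u\<in>f ` D. E v u}" using e a bc by auto
      moreover have "finite {u\<in>f ` D. E v u}"
        using finite_subset[OF _ finV] \<open>f ` D \<subseteq> V\<close> by auto
      ultimately have "card {f b, f c} \<le> card {u\<in>f ` D. E v u}" by (rule card_mono[rotated])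
      then show "2 \<le> card {u\<in>f ` D. E v u}" using ne by simp
    qed
    ultimately show False by (rule core_blocks[OF cub conv])
  qed
  have le: "card (S \<inter> ?H) \<le> 2"
  proof (rule ccontr)
    assume "\<not> card (S \<inter> ?H) \<le> 2"
    hence g3: "3 \<le> card (S \<inter> ?H)" by simp
    obtain P L where pk: "peel_ok i P L" using peel_exists[OF assms(2)] by blast
    have Pn: "P \<subseteq> {1..?n}" "card P = 2" "P \<union> set L = {1..?n}" "peel i P L"
      using pk by (auto simp: peel_ok_def)
    define S' where "S' = (S - ?H) \<union> f ` P"
    have S'V: "S' \<subseteq> V" using SV HV Pn(1) by (auto simp: S'_def)
    have "conversion_set V E S'"
    proof (rule coreless_conv[OF cub S'V], intro allI impI notI)
      fix C assume C: "C \<subseteq> V" "C \<inter> S' = {}" "C \<noteq> {}" "\<forall>v\<in>C. 2 \<le> card {u\<in>C. E v u}"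
      have fP: "f ` P \<inter> C = {}" using C(2) by (auto simp: S'_def)
      have sL: "set L \<subseteq> {1..?n}" using Pn(3) by auto
      have "f ` set L \<inter> C = {}"
        by (rule peel_avoid[OF cub ic C(1) C(4) Pn(4) Pn(1) sL fP])
      then have "f ` (P \<union> set L) \<inter> C = {}" using fP by (simp add: image_Un Int_Un_distrib2)
      then have "?H \<inter> C = {}" using Pn(3) by simp
      then have "C \<inter> S = {}" using C(2) unfolding S'_def by blast
      then show False by (rule core_blocks[OF cub conv C(1) _ C(3) C(4)])
    qed
    hence "card S \<le> card S'" by (rule mn)
    moreover have "card S' \<le> card (S - ?H) + card (f ` P)" unfolding S'_def by (rule card_Un_le)
    moreover have "card (f ` P) \<le> 2" using card_image_le[of P f] Pn(2) card.infinite by fastforce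
    moreover have "card (S - ?H) = card S - card (S \<inter> ?H)"
      using finS by (simp add: card_Diff_subset_Int)
    moreover have "card (S \<inter> ?H) \<le> card S" using finS by (simp add: card_mono)
    ultimately show False using g3 by linarith
  qed
  show ?thesis using ge le by simp
qed

end
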